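(* Fix $k\ge 2$ and let $D$ be either $A$ or $S$. Assume that for every sorted $2k$-tuple $x_1\le\dots\le x_{2k}$ of reals, the partition of $\{1,\dots,2k\}$ into $\{1,\dots,k\}$ and $\{k+1,\dots,2k\}$ is a minimal $k$-tuple partition with respect to $D$. Then for every $n\ge 1$ and every sorted $kn$-tuple $x_1\le x_2\le\dots\le x_{kn}$ of reals, the partition of $\{1,\dots,kn\}$ into the consecutive blocks $$B_i=\{(i-1)k+1,\,(i-1)k+2,\,\dots,\,ik\},\qquad i=1,\dots,n,$$ is a minimal $k$-tuple partition with respect to $D$.
   Context: For real numbers $x_1,\dots,x_k$ (repetitions allowed) define $A(x_1,\dots,x_k)=\sum_{1\le i<j\le k}|x_j-x_i|$ and $S(x_1,\dots,x_k)=\sum_{1\le i<j\le k}(x_j-x_i)^2$. Both depend only on the multiset of entries. Given real numbers $x_1,\dots,x_{kn}$, a $k$-tuple partition is a partition of the index set $\{1,\dots,kn\}$ into $n$ blocks, each of size $k$. The cost of the partition is the sum over the blocks $\{i_1,\dots,i_k\}$ of $D(x_{i_1},\dots,x_{i_k})$. A $k$-tuple partition is minimal with respect to $D$ if its cost is less than or equal to the cost of every other $k$-tuple partition. *)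

theory Defs
  imports Main "HOL-Library.Disjoint_Sets" Complex_Main
begin

text \<open>Entries are given by x :: nat => real, indexed on {1..m}.
  A block is a finite set of indices; D(x_{i_1},...,x_{i_k}) is the sum over
  pairs of distinct indices i < j in the block.\<close>

definition DA :: "(nat \<Rightarrow> real) \<Rightarrow> nat set \<Rightarrow> real" where
  "DA x B = (\<Sum>i\<in>B. \<Sum>j\<in>B. if i < j then \<bar>x j - x i\<bar> else 0)"

definition DS :: "(nat \<Rightarrow> real) \<Rightarrow> nat set \<Rightarrow> real" where
  "DS x B = (\<Sum>i\<in>B. \<Sum>j\<in>B. if i < j then (x j - x i)^2 else 0)"

definition ktuple_partition :: "nat \<Rightarrow> nat set \<Rightarrow> nat set set \<Rightarrow> bool" where
  "ktuple_partition k I P \<longleftrightarrow> partition_on I P \<and> (\<forall>B\<in>P. card B = k)"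

definition cost :: "((nat \<Rightarrow> real) \<Rightarrow> nat set \<Rightarrow> real) \<Rightarrow> (nat \<Rightarrow> real) \<Rightarrow> nat set set \<Rightarrow> real" where
  "cost D x P = (\<Sum>B\<in>P. D x B)"

definition minimal_partition ::
  "((nat \<Rightarrow> real) \<Rightarrow> nat set \<Rightarrow> real) \<Rightarrow> nat \<Rightarrow> (nat \<Rightarrow> real) \<Rightarrow> nat set \<Rightarrow> nat set set \<Rightarrow> bool" where
  "minimal_partition D k x I P \<longleftrightarrow> ktuple_partition k I P \<and>
     (\<forall>Q. ktuple_partition k I Q \<longrightarrow> cost D x P \<le> cost D x Q)"

end

theory Submission imports Defs begin

lemma half_sum:
  fixes f :: "real \<Rightarrow> real \<Rightarrow> real" and x :: "nat \<Rightarrow> real" and B :: "nat set"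
  assumes fin: "finite B" and sym: "\<And>a b. f a b = f b a" and z: "\<And>a. f a a = 0"
  shows "(\<Sum>i\<in>B. \<Sum>j\<in>B. if i < j then f (x i) (x j) else 0) = (\<Sum>i\<in>B. \<Sum>j\<in>B. f (x i) (x j)) / 2"
proof -
  have pw: "f (x i) (x j) = (if i < j then f (x i) (x j) else 0) + (if j < i then f (x j) (x i) else 0)" for i j :: nat
  proof (cases i j rule: linorder_cases)
    case equal then show ?thesis using z[of "x i"] by simp
  next
    case less then show ?thesis by simp
  next
    case greater then show ?thesis using sym[of "x i" "x j"] by simp
  qed
  have "(\<Sum>i\<in>B. \<Sum>j\<in>B. f (x i) (x j)) = (\<Sum>i\<in>B. \<Sum>j\<in>B. if i < j then f (x i) (x j) else 0) + (\<Sum>i\<in>B. \<Sum>j\<in>B. if j < i then f (x j) (x i) else 0)"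
    unfolding sum.distrib[symmetric] by (intro sum.cong refl pw)
  also have "(\<Sum>i\<in>B. \<Sum>j\<in>B. if j < i then f (x j) (x i) else 0) = (\<Sum>i\<in>B. \<Sum>j\<in>B. if i < j then f (x i) (x j) else 0)"
    by (rule sum.swap)
  finally show ?thesis by linarith
qed

lemma D_half:
  assumes "D = DA \<or> D = DS"
  shows "\<exists>f::real\<Rightarrow>real\<Rightarrow>real. \<forall>x B. finite B \<longrightarrow> D x B = (\<Sum>i\<in>B. \<Sum>j\<in>B. f (x i) (x j)) / 2"
  using assms(1)
proof
  assume "D = DA"
  have "DA x B = (\<Sum>i\<in>B. \<Sum>j\<in>B. \<bar>x j - x i\<bar>) / 2" if "finite B" for x B
    unfolding DA_def by (rule half_sum[of B "\<lambda>a b. \<bar>b - a\<bar>" x, OF that abs_minus_commute]) simp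
  then show ?thesis unfolding \<open>D = DA\<close> by (intro exI[of _ "\<lambda>a b. \<bar>b - a\<bar>"]) simp
next
  assume "D = DS"
  have "DS x B = (\<Sum>i\<in>B. \<Sum>j\<in>B. (x j - x i)^2) / 2" if "finite B" for x B
    unfolding DS_def by (rule half_sum[of B "\<lambda>a b. (b - a)^2" x, OF that power2_commute]) simp
  then show ?thesis unfolding \<open>D = DS\<close> by (intro exI[of _ "\<lambda>a b. (b - a)^2"]) simp
qed

lemma D_reindex:
  assumes "D = DA \<or> D = DS" "inj_on e S" "finite S"
  shows "D x (e ` S) = D (x \<circ> e) S"
proof -
  obtain f where f: "\<And>x B. finite B \<Longrightarrow> D x B = (\<Sum>i\<in>B. \<Sum>j\<in>B. f (x i) (x j)) / 2"
    using D_half[OF assms(1)] by blast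
  have "D x (e ` S) = (\<Sum>i\<in>e`S. \<Sum>j\<in>e`S. f (x i) (x j)) / 2" using f assms by simp
  also have "\<dots> = (\<Sum>i\<in>S. \<Sum>j\<in>S. f (x (e i)) (x (e j))) / 2"
    using assms(2) by (simp add: sum.reindex)
  also have "\<dots> = D (x \<circ> e) S" using f assms by simp
  finally show ?thesis .
qed

lemma cost_pair: "A \<noteq> B \<Longrightarrow> cost D x {A, B} = D x A + D x B"
  unfolding cost_def by simp

lemma exchange:
  assumes hyp: "\<forall>x::nat\<Rightarrow>real. mono_on {1..2*k} x \<longrightarrow> minimal_partition D k x {1..2*k} {{1..k},{k+1..2*k}}"
    and DD: "D = DA \<or> D = DS" and k: "k \<ge> 1"
    and B: "finite B" "card B = k" and C: "finite C" "card C = k" and disj: "B \<inter> C = {}"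
    and mono: "mono_on (B \<union> C) x"
  shows "\<exists>L H. L \<union> H = B \<union> C \<and> L \<inter> H = {} \<and> card L = k \<and> card H = k \<and>
           (\<forall>l\<in>L. \<forall>h\<in>H. l < h) \<and> D x L + D x H \<le> D x B + D x C"
proof -
  define U where "U = B \<union> C"
  have finU: "finite U" using B C U_def by simp
  have cardU: "card U = 2*k" using B C disj U_def by (simp add: card_Un_disjoint)
  define xs where "xs = sorted_list_of_set U"
  define e where "e i = xs ! (i - 1)" for i
  have lxs: "length xs = 2*k" using cardU xs_def by simp
  have sxs: "sorted_wrt (<) xs" using xs_def by simp
  have setxs: "set xs = U" using xs_def finU by simp
  have emono: "e i < e j" if "i \<in> {1..2*k}" "j \<in> {1..2*k}" "i < j" for i j
    unfolding e_def using that lxs sorted_wrt_nth_less[OF sxs, of "i-1" "j-1"] by auto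
  have einU: "e i \<in> U" if "i \<in> {1..2*k}" for i
    unfolding e_def using that lxs setxs by (metis atLeastAtMost_iff nth_mem diff_less less_le_trans less_numeral_extra(1) le_eq_less_or_eq)
  have eimg: "e ` {1..2*k} = U"
  proof
    show "e ` {1..2*k} \<subseteq> U" using einU by auto
    show "U \<subseteq> e ` {1..2*k}"
    proof
      fix u assume "u \<in> U"
      then obtain i where i: "i < 2*k" "xs ! i = u" using setxs lxs by (metis in_set_conv_nth)
      then have "e (Suc i) = u" "Suc i \<in> {1..2*k}" by (auto simp: e_def)
      then show "u \<in> e ` {1..2*k}" by (metis imageI)
    qed
  qed
  have einj: "inj_on e {1..2*k}"
  proof (rule inj_onI)
    fix i j assume "i \<in> {1..2*k}" "j \<in> {1..2*k}" "e i = e j"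
    then show "i = j" using emono[of i j] emono[of j i] by (cases i j rule: linorder_cases) auto
  qed
  define y where "y = x \<circ> e"
  have ymono: "mono_on {1..2*k} y"
  proof (rule mono_onI)
    fix i j assume "i \<in> {1..2*k}" "j \<in> {1..2*k}" "i \<le> j"
    then have "e i \<le> e j" using emono[of i j] by (cases "i = j") auto
    moreover have "e i \<in> B \<union> C" "e j \<in> B \<union> C" using einU \<open>i \<in> _\<close> \<open>j \<in> _\<close> U_def by auto
    ultimately show "y i \<le> y j" unfolding y_def using mono by (simp add: mono_onD)
  qed
  define B' where "B' = {i\<in>{1..2*k}. e i \<in> B}"
  define C' where "C' = {i\<in>{1..2*k}. e i \<in> C}"
  have eB: "e ` B' = B"
  proof
    show "e ` B' \<subseteq> B" using B'_def by auto
    show "B \<subseteq> e ` B'"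
    proof
      fix b assume "b \<in> B"
      then obtain i where "i \<in> {1..2*k}" "b = e i" using eimg U_def by blast
      then show "b \<in> e ` B'" using \<open>b \<in> B\<close> B'_def by blast
    qed
  qed
  have eC: "e ` C' = C"
  proof
    show "e ` C' \<subseteq> C" using C'_def by auto
    show "C \<subseteq> e ` C'"
    proof
      fix b assume "b \<in> C"
      then obtain i where "i \<in> {1..2*k}" "b = e i" using eimg U_def by blast
      then show "b \<in> e ` C'" using \<open>b \<in> C\<close> C'_def by blast
    qed
  qed
  have injB: "inj_on e B'" using einj B'_def by (auto intro: inj_on_subset)
  have injC: "inj_on e C'" using einj C'_def by (auto intro: inj_on_subset)
  have cB': "card B' = k" using card_image[OF injB] eB B by simp
  have cC': "card C' = k" using card_image[OF injC] eC C by simp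
  have B'ne: "B' \<noteq> {}" using cB' k by auto
  have C'ne: "C' \<noteq> {}" using cC' k by auto
  have BC'dis: "B' \<inter> C' = {}" using disj B'_def C'_def by auto
  have BC'ne: "B' \<noteq> C'" using BC'dis B'ne by auto
  have BC'un: "B' \<union> C' = {1..2*k}" using einU unfolding U_def B'_def C'_def by blast
  have part: "ktuple_partition k {1..2*k} {B', C'}"
    unfolding ktuple_partition_def
  proof
    show "partition_on {1..2*k} {B', C'}"
      by (rule partition_onI) (use BC'un BC'dis B'ne C'ne in \<open>auto simp: disjnt_def\<close>)
    show "\<forall>B\<in>{B', C'}. card B = k" using cB' cC' by auto
  qed
  have "cost D y {{1..k},{k+1..2*k}} \<le> cost D y {B', C'}"
    using hyp ymono part unfolding minimal_partition_def by blast
  moreover have "{1..k} \<noteq> {k+1..2*k}" using k by auto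
  ultimately have ineq: "D y {1..k} + D y {k+1..2*k} \<le> D y B' + D y C'"
    using BC'ne by (simp add: cost_pair)
  define L where "L = e ` {1..k}"
  define H where "H = e ` {k+1..2*k}"
  have injL: "inj_on e {1..k}" using einj by (auto intro: inj_on_subset)
  have injH: "inj_on e {k+1..2*k}" using einj by (auto intro: inj_on_subset)
  have "D x L = D y {1..k}" unfolding L_def y_def using D_reindex[OF DD injL] by simp
  moreover have "D x H = D y {k+1..2*k}" unfolding H_def y_def using D_reindex[OF DD injH] by simp
  moreover have "D x B = D y B'" unfolding y_def using D_reindex[OF DD injB] eB B'_def by simp
  moreover have "D x C = D y C'" unfolding y_def using D_reindex[OF DD injC] eC C'_def by simp
  ultimately have "D x L + D x H \<le> D x B + D x C" using ineq by simp
  moreover have "L \<union> H = B \<union> C"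
  proof -
    have "{1..k} \<union> {k+1..2*k} = {1..2*k}" by auto
    then show ?thesis unfolding L_def H_def using eimg U_def by (metis image_Un)
  qed
  moreover have "\<forall>l\<in>L. \<forall>h\<in>H. l < h" unfolding L_def H_def using emono by auto
  moreover then have "L \<inter> H = {}" by fastforce
  moreover have "card L = k" unfolding L_def using card_image[OF injL] by simp
  moreover have "card H = k" unfolding H_def using card_image[OF injH] by simp
  ultimately show ?thesis by blast
qed

lemma top_block:
  assumes hyp: "\<forall>x::nat\<Rightarrow>real. mono_on {1..2*k} x \<longrightarrow> minimal_partition D k x {1..2*k} {{1..k},{k+1..2*k}}"
    and DD: "D = DA \<or> D = DS" and k: "k \<ge> 1"
    and I: "finite I" and TI: "T \<subseteq> I" and cT: "card T = k" and Ttop: "\<forall>t\<in>T. \<forall>u\<in>I-T. u < t"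
    and xm: "mono_on I x"
  shows "\<forall>Q. ktuple_partition k I Q \<longrightarrow> (\<exists>B\<in>Q. k \<le> card (B \<inter> T) + m) \<longrightarrow>
           (\<exists>Q'. ktuple_partition k I Q' \<and> T \<in> Q' \<and> cost D x Q' \<le> cost D x Q)"
proof (induction m)
  case 0
  show ?case
  proof (intro allI impI)
    fix Q assume Q: "ktuple_partition k I Q" and "\<exists>B\<in>Q. k \<le> card (B \<inter> T) + 0"
    then obtain B where B: "B \<in> Q" "k \<le> card (B \<inter> T)" by auto
    have cB: "card B = k" using Q B unfolding ktuple_partition_def by auto
    then have fB: "finite B" using k by (metis card.infinite not_one_le_zero)
    have "card (B \<inter> T) \<le> card B" using fB by (simp add: card_mono)
    then have "B \<inter> T = B" using card_subset_eq[OF fB, of "B \<inter> T"] B cB by auto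
    then have "B \<subseteq> T" by auto
    moreover have "finite T" using I TI finite_subset by auto
    ultimately have "B = T" using card_subset_eq cB cT by metis
    then show "\<exists>Q'. ktuple_partition k I Q' \<and> T \<in> Q' \<and> cost D x Q' \<le> cost D x Q"
      using Q B by auto
  qed
next
  case (Suc m)
  show ?case
  proof (intro allI impI)
    fix Q assume Q: "ktuple_partition k I Q" and ex: "\<exists>B\<in>Q. k \<le> card (B \<inter> T) + Suc m"
    then obtain B where B: "B \<in> Q" "k \<le> card (B \<inter> T) + Suc m" by auto
    show "\<exists>Q'. ktuple_partition k I Q' \<and> T \<in> Q' \<and> cost D x Q' \<le> cost D x Q"
    proof (cases "k \<le> card (B \<inter> T) + m")
      case True
      then show ?thesis using Suc.IH Q B by blast
    next
      case False
      have fT: "finite T" using I TI finite_subset by auto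
      have pQ: "partition_on I Q" and cQ: "\<forall>B\<in>Q. card B = k" using Q unfolding ktuple_partition_def by auto
      have fin_blocks: "finite X" if "X \<in> Q" for X using that cQ k by (metis card.infinite not_one_le_zero)
      have ne_blocks: "X \<noteq> {}" if "X \<in> Q" for X using that cQ k by fastforce
      have UQ: "\<Union>Q = I" using pQ partition_onD1 by blast
      have disQ: "X \<inter> Y = {}" if "X \<in> Q" "Y \<in> Q" "X \<noteq> Y" for X Y
        using pQ that unfolding partition_on_def disjoint_def by auto
      have finQ: "finite Q" using finite_elements[OF I pQ] .
      have "\<not> T \<subseteq> B"
      proof
        assume "T \<subseteq> B"
        then have "B \<inter> T = T" by auto
        then show False using False cT by simp
      qed
      then obtain j where j: "j \<in> T" "j \<notin> B" by auto
      then have "j \<in> I" using TI by auto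
      then obtain C where C: "C \<in> Q" "j \<in> C" using UQ by auto
      have BC: "B \<noteq> C" using j C by auto
      have disBC: "B \<inter> C = {}" using disQ B C BC by auto
      have BCI: "B \<union> C \<subseteq> I" using UQ B C by auto
      obtain L H where LH: "L \<union> H = B \<union> C" "L \<inter> H = {}" "card L = k" "card H = k"
          "\<forall>l\<in>L. \<forall>h\<in>H. l < h" "D x L + D x H \<le> D x B + D x C"
        using exchange[OF hyp DD k fin_blocks[OF B(1)] cQ[rule_format, OF B(1)] fin_blocks[OF C(1)]
            cQ[rule_format, OF C(1)] disBC mono_on_subset[OF xm BCI]] by blast
      have Lne: "L \<noteq> {}" using LH k by fastforce
      have Hne: "H \<noteq> {}" using LH k by fastforce
      have fH: "finite H" using LH k by (metis card.infinite not_one_le_zero)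
      define Q0 where "Q0 = Q - {B, C}"
      define Q' where "Q' = insert L (insert H Q0)"
      have Q0dis: "X \<inter> (B \<union> C) = {}" if "X \<in> Q0" for X
        using that disQ B C unfolding Q0_def by blast
      have LQ0: "L \<notin> Q0" using Q0dis LH Lne by blast
      have HQ0: "H \<notin> Q0" using Q0dis LH Hne by blast
      have LneH: "L \<noteq> H" using LH Lne by auto
      have finQ0: "finite Q0" using finQ Q0_def by auto
      have costQ': "cost D x Q' = D x L + D x H + cost D x Q0"
        unfolding Q'_def cost_def using LQ0 HQ0 LneH finQ0 by simp
      have costQ: "cost D x Q = D x B + D x C + cost D x Q0"
      proof -
        have eqQ: "Q = insert B (insert C Q0)" using B C Q0_def by auto
        have nin: "B \<notin> insert C Q0" "C \<notin> Q0" using BC Q0_def by auto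
        have "sum (D x) (insert B (insert C Q0)) = D x B + D x C + sum (D x) Q0"
          using nin finQ0 by simp
        then show ?thesis unfolding cost_def using eqQ by simp
      qed
      have partQ': "ktuple_partition k I Q'"
        unfolding ktuple_partition_def
      proof
        show "partition_on I Q'"
        proof (rule partition_onI)
          have "\<Union>Q = B \<union> C \<union> \<Union>Q0" using B C Q0_def by auto
          then show "\<Union>Q' = I" using UQ LH Q'_def by auto
          show "{} \<notin> Q'" using Lne Hne ne_blocks Q'_def Q0_def by auto
          fix p q assume pq: "p \<in> Q'" "q \<in> Q'" "p \<noteq> q"
          have LBC: "L \<subseteq> B \<union> C" "H \<subseteq> B \<union> C" using LH by auto
          have "p \<in> {L,H} \<or> p \<in> Q0" "q \<in> {L,H} \<or> q \<in> Q0" using pq by (auto simp: Q'_def)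
          moreover have "L \<inter> Y = {}" "H \<inter> Y = {}" "Y \<inter> L = {}" "Y \<inter> H = {}" if "Y \<in> Q0" for Y
            using Q0dis[OF that] LBC by blast+
          moreover have "p \<inter> q = {}" if "p \<in> Q0" "q \<in> Q0"
            using disQ that Q0_def pq(3) by auto
          moreover have "H \<inter> L = {}" using LH by auto
          ultimately show "disjnt p q" unfolding disjnt_def using LH(2) pq(3) by auto
        qed
        show "\<forall>B\<in>Q'. card B = k" using LH cQ Q'_def Q0_def by auto
      qed
      have BCT: "(B \<union> C) \<inter> T \<subseteq> H"
      proof
        fix u assume u: "u \<in> (B \<union> C) \<inter> T"
        show "u \<in> H"
        proof (rule ccontr)
          assume "u \<notin> H"
          then have uL: "u \<in> L" using u LH by auto
          have "H \<subseteq> T"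
          proof
            fix h assume "h \<in> H"
            then have "u < h" "h \<in> I" using LH uL BCI by auto
            then show "h \<in> T" using Ttop u by (meson DiffI IntD2 not_less_iff_gr_or_eq)
          qed
          then have "insert u H \<subseteq> T" using u by auto
          then have "card (insert u H) \<le> card T" using fT card_mono by blast
          then show False using \<open>u \<notin> H\<close> fH LH cT by simp
        qed
      qed
      have "insert j (B \<inter> T) \<subseteq> H \<inter> T" using BCT j C by auto
      then have "card (insert j (B \<inter> T)) \<le> card (H \<inter> T)" using fT by (simp add: card_mono)
      then have "card (B \<inter> T) + 1 \<le> card (H \<inter> T)" using j fT by simp
      then have "\<exists>B\<in>Q'. k \<le> card (B \<inter> T) + m" using B(2) Q'_def by force
      then obtain Q'' where Q'': "ktuple_partition k I Q''" "T \<in> Q''" "cost D x Q'' \<le> cost D x Q'"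
        using Suc.IH partQ' by blast
      moreover have "cost D x Q' \<le> cost D x Q" using costQ costQ' LH by simp
      ultimately show ?thesis by force
    qed
  qed
qed



definition PP :: "nat \<Rightarrow> nat \<Rightarrow> nat set set" where
  "PP k n = (\<lambda>i. {(i-1)*k+1..i*k}) ` {1..n}"

lemma PP_Suc: "PP k (Suc n) = insert {k*n+1..k*Suc n} (PP k n)"
proof -
  have "{1..Suc n} = insert (Suc n) {1..n}" by auto
  then show ?thesis unfolding PP_def by (simp add: mult.commute)
qed

lemma PP_part: assumes k: "k \<ge> 1" shows "ktuple_partition k {1..k*n} (PP k n)"
proof (induction n)
  case 0
  show ?case by (simp add: PP_def ktuple_partition_def partition_on_empty)
next
  case (Suc n)
  define T where "T = {k*n+1..k*Suc n}"
  have U: "\<Union>(PP k n) = {1..k*n}" using Suc.IH unfolding ktuple_partition_def partition_on_def by auto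
  have dj: "disjnt T (\<Union>(PP k n))" unfolding U T_def disjnt_def by auto
  have diff: "{1..k*Suc n} - T = {1..k*n}" unfolding T_def by auto
  have "partition_on {1..k*Suc n} (insert T (PP k n))"
    unfolding partition_on_insert[OF dj] diff using Suc.IH k
    by (auto simp: ktuple_partition_def T_def)
  moreover have "card T = k" unfolding T_def by simp
  ultimately show ?case using Suc.IH unfolding ktuple_partition_def PP_Suc T_def by auto
qed

lemma main:
  assumes hyp: "\<forall>x::nat\<Rightarrow>real. mono_on {1..2*k} x \<longrightarrow> minimal_partition D k x {1..2*k} {{1..k},{k+1..2*k}}"
    and DD: "D = DA \<or> D = DS" and k: "k \<ge> 1"
  shows "\<forall>x Q. mono_on {1..k*n} x \<longrightarrow> ktuple_partition k {1..k*n} Q \<longrightarrow> cost D x (PP k n) \<le> cost D x Q"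
proof (induction n)
  case 0
  show ?case by (simp add: PP_def ktuple_partition_def partition_on_empty cost_def)
next
  case (Suc n)
  show ?case
  proof (intro allI impI)
    fix x :: "nat \<Rightarrow> real" and Q assume xm: "mono_on {1..k*Suc n} x" and Q: "ktuple_partition k {1..k*Suc n} Q"
    define I where "I = {1..k*Suc n}"
    define T where "T = {k*n+1..k*Suc n}"
    have TI: "T \<subseteq> I" unfolding T_def I_def by auto
    have cT: "card T = k" unfolding T_def by simp
    have Ttop: "\<forall>t\<in>T. \<forall>u\<in>I-T. u < t" unfolding T_def I_def by auto
    have "1 \<in> I" unfolding I_def using k by auto
    then obtain B where B: "B \<in> Q" using Q unfolding ktuple_partition_def partition_on_def I_def by auto
    have "\<exists>B\<in>Q. k \<le> card (B \<inter> T) + k" using B by auto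
    then obtain Q' where Q': "ktuple_partition k I Q'" "T \<in> Q'" "cost D x Q' \<le> cost D x Q"
      using top_block[OF hyp DD k _ TI cT Ttop, of x k] xm Q I_def by auto
    define Q'' where "Q'' = Q' - {T}"
    have eq: "Q' = insert T Q''" using Q' Q''_def by auto
    have pQ': "partition_on I Q'" using Q' ktuple_partition_def by auto
    have dj: "disjnt T (\<Union>Q'')"
      using pQ' Q'(2) unfolding Q''_def partition_on_def disjoint_def disjnt_def by auto
    have diff: "I - T = {1..k*n}" unfolding T_def I_def by auto
    have "partition_on {1..k*n} Q''" using pQ' unfolding eq partition_on_insert[OF dj] diff by auto
    then have Q''p: "ktuple_partition k {1..k*n} Q''" using Q' unfolding ktuple_partition_def Q''_def by auto
    have "mono_on {1..k*n} x" using xm by (rule mono_on_subset) auto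
    then have ih: "cost D x (PP k n) \<le> cost D x Q''" using Suc.IH Q''p by blast
    have finQ'': "finite Q''" using finite_elements[OF _ pQ'] I_def Q''_def by auto
    have TQ'': "T \<notin> Q''" using Q''_def by auto
    have c1: "cost D x Q' = D x T + cost D x Q''" unfolding eq cost_def using finQ'' TQ'' by simp
    have U: "\<Union>(PP k n) = {1..k*n}" using PP_part[OF k, of n] unfolding ktuple_partition_def partition_on_def by auto
    have TP: "T \<notin> PP k n"
    proof
      assume "T \<in> PP k n"
      then have "T \<subseteq> {1..k*n}" using U by auto
      moreover have "k*n+1 \<in> T" unfolding T_def using k by auto
      ultimately show False by auto
    qed
    have finP: "finite (PP k n)" unfolding PP_def by simp
    have c2: "cost D x (PP k (Suc n)) = D x T + cost D x (PP k n)"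
      unfolding PP_Suc cost_def T_def[symmetric] using TP finP by simp
    show "cost D x (PP k (Suc n)) \<le> cost D x Q" using c1 c2 ih Q'(3) by simp
  qed
qed

theorem theorem1p4:
  fixes k :: nat and D :: "(nat \<Rightarrow> real) \<Rightarrow> nat set \<Rightarrow> real"
  assumes "k \<ge> 2"
    and "D = DA \<or> D = DS"
    and "\<forall>x :: nat \<Rightarrow> real. mono_on {1..2*k} x \<longrightarrow>
           minimal_partition D k x {1..2*k} {{1..k}, {k+1..2*k}}"
  shows "\<forall>n \<ge> 1. \<forall>x :: nat \<Rightarrow> real. mono_on {1..k*n} x \<longrightarrow>
           minimal_partition D k x {1..k*n} ((\<lambda>i. {(i-1)*k+1..i*k}) ` {1..n})"
proof (intro allI impI)
  fix n :: nat and x :: "nat \<Rightarrow> real"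
  assume "mono_on {1..k*n} x"
  have k: "k \<ge> 1" using assms(1) by simp
  show "minimal_partition D k x {1..k*n} ((\<lambda>i. {(i-1)*k+1..i*k}) ` {1..n})"
    unfolding minimal_partition_def PP_def[symmetric]
    using PP_part[OF k, of n] main[OF assms(3) assms(2) k, of n] \<open>mono_on {1..k*n} x\<close> by blast
qed

end
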